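(* Let $k$ and $r$ be positive integers with $r \ge 2$, $r \mid k$ and $k \ge 2r$. Let $\chi : \{1, 2, \ldots, rk-2r+1\} \to \{0,1\}$ be a 2-coloring such that $\chi(1) = 0$ and $\chi(r-1) = 1$. Suppose at least one of the following holds: (a) $\chi(r) = 0$; (b) $\chi(k-2) = 1$; (c) $\chi(k-1) = 0$; (d) $\chi(k) = 0$; (e) $\chi(rk-2r-1) = 0$; (f) $\chi(rk-2r+1) = 1$. Then there exists a solution $(\hat{x}_1, \ldots, \hat{x}_k)$ of the equation $x_1 + \cdots + x_{k-1} = x_k$ with all $\hat{x}_i \in \{1, \ldots, rk-2r+1\}$ such that $\sum_{i=1}^k \chi(\hat{x}_i) \equiv 0 \pmod r$.
   Context: Solutions of the equation $x_1 + \cdots + x_{k-1} = x_k$ are taken in positive integers. A solution $(\hat{x}_1,\ldots,\hat{x}_k)$ is called $r$-zero-sum under $\chi$ if $\sum_{i=1}^k \chi(\hat{x}_i) \equiv 0 \pmod r$. *)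

theory Defs
  imports Main
begin

definition is_solution_in :: "nat \<Rightarrow> nat \<Rightarrow> (nat \<Rightarrow> nat) \<Rightarrow> bool" where
  "is_solution_in k N x \<longleftrightarrow> (\<forall>i\<in>{1..k}. x i \<in> {1..N}) \<and> (\<Sum>i=1..k-1. x i) = x k"

definition zero_sum :: "nat \<Rightarrow> (nat \<Rightarrow> nat) \<Rightarrow> nat \<Rightarrow> (nat \<Rightarrow> nat) \<Rightarrow> bool" where
  "zero_sum r \<chi> k x \<longleftrightarrow> (\<Sum>i=1..k. \<chi> (x i)) mod r = 0"

end

theory Submission
  imports Defs
begin

lemma sum_nth_shift: "(\<Sum>i=1..length xs. f (xs!(i-1))) = sum_list (map f xs)"
proof (induction xs rule: rev_induct)
  case Nil then show ?case by simp
next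
  case (snoc a xs)
  have "(\<Sum>i=1..length (xs@[a]). f ((xs@[a])!(i-1))) =
        (\<Sum>i=1..length xs. f ((xs@[a])!(i-1))) + f a"
    by (simp add: nth_append)
  also have "(\<Sum>i=1..length xs. f ((xs@[a])!(i-1))) = (\<Sum>i=1..length xs. f (xs!(i-1)))"
    by (rule sum.cong) (auto simp: nth_append)
  finally show ?case using snoc by simp
qed

lemma mk:
  assumes len: "length xs = k - 1" and k2: "k \<ge> 2"
    and el: "\<forall>v\<in>set xs. 1 \<le> v \<and> v \<le> N" and sN: "sum_list xs \<le> N"
    and col: "(sum_list (map \<chi> xs) + \<chi> (sum_list xs)) mod r = 0"
  shows "\<exists>x. is_solution_in k N x \<and> zero_sum r \<chi> k x"
proof -
  define x where "x = (\<lambda>i. if i < k then xs!(i-1) else sum_list xs)"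
  have ne: "xs \<noteq> []" using len k2 by auto
  then obtain a where "a \<in> set xs" by fastforce
  hence "1 \<le> sum_list xs" using el member_le_sum_list[of a xs] by fastforce
  have e1: "(\<Sum>i=1..k-1. g (x i)) = sum_list (map g xs)" for g :: "nat \<Rightarrow> nat"
  proof -
    have "(\<Sum>i=1..k-1. g (x i)) = (\<Sum>i=1..length xs. g (xs!(i-1)))"
      using len by (intro sum.cong) (auto simp: x_def)
    thus ?thesis using sum_nth_shift[of g xs] by simp
  qed
  have split: "\<And>g::nat\<Rightarrow>nat. (\<Sum>i=1..k. g i) = (\<Sum>i=1..k-1. g i) + g k"
  proof -
    fix g :: "nat \<Rightarrow> nat"
    obtain n where n: "k = Suc n" using k2 by (cases k) auto
    show "(\<Sum>i=1..k. g i) = (\<Sum>i=1..k-1. g i) + g k" unfolding n by simp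
  qed
  have xk: "x k = sum_list xs" by (simp add: x_def)
  have sol: "is_solution_in k N x"
    unfolding is_solution_in_def
  proof
    show "\<forall>i\<in>{1..k}. x i \<in> {1..N}"
    proof
      fix i assume i: "i \<in> {1..k}"
      show "x i \<in> {1..N}"
      proof (cases "i < k")
        case True
        hence "xs!(i-1) \<in> set xs" using len i by auto
        thus ?thesis using True el by (auto simp: x_def)
      next
        case False thus ?thesis using \<open>1 \<le> sum_list xs\<close> sN by (auto simp: x_def)
      qed
    qed
    show "(\<Sum>i=1..k-1. x i) = x k" using e1[of id] xk by simp
  qed
  have "zero_sum r \<chi> k x"
    unfolding zero_sum_def using split[of "\<lambda>i. \<chi> (x i)"] e1[of \<chi>] xk col by simp
  with sol show ?thesis by blast
qed


lemma a1: "sum_list (replicate (s+2) (1::nat) @ replicate rem (s+3+1+D) @ replicate t (s+3+D) @ replicate u (s+3))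
   = (s+3) - 1 + ((rem+t)*D + rem) + (rem+t+u)*(s+3)"
  by (simp add: sum_list_replicate algebra_simps)
lemma a2: "sum_list (replicate (s+2) (1::nat) @ replicate (q+1) (s+3+D) @ replicate w (s+2) @ replicate (p+2) (s+3))
   = (s+3) - 1 + (q*D + rem) + (D+2)*(s+3)" if "D = rem + w" "rem = q+1+p"
  using that by (simp add: sum_list_replicate algebra_simps)
lemma a3: "sum_list (replicate (s+2) (2*(s+3)+e-2) @ replicate s 2 @ replicate (e+3) (1::nat)) = (s+3)*(2*(s+3)+e) - 2*(s+3) - 1"
  by (simp add: sum_list_replicate algebra_simps)
lemma a4: "sum_list (replicate (s+1) (2*(s+3)+e-2) @ replicate 2 (s+2) @ replicate (s+3+e-2) 2 @ [1::nat]) = (s+3)*(2*(s+3)+e) - 2*(s+3) - 1"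
  by (simp add: sum_list_replicate algebra_simps)

lemma mk2:
  assumes "length xs = k - 1" "k \<ge> 2" "\<forall>v\<in>set xs. 1 \<le> v \<and> v \<le> N"
    "sum_list xs = T" "T \<le> N" "(sum_list (map \<chi> xs) + \<chi> T) mod r = 0"
  shows "\<exists>x. is_solution_in k N x \<and> zero_sum r \<chi> k x"
  using mk[of xs k N \<chi> r] assms by simp

theorem lemma2:
  fixes k r :: nat and \<chi> :: "nat \<Rightarrow> nat"
  assumes "r \<ge> 2" and "r dvd k" and "k \<ge> 2 * r"
    and "\<forall>i\<in>{1..r*k - 2*r + 1}. \<chi> i \<in> {0, 1}"
    and "\<chi> 1 = 0" and "\<chi> (r - 1) = 1"
    and "\<chi> r = 0 \<or> \<chi> (k - 2) = 1 \<or> \<chi> (k - 1) = 0 \<or> \<chi> k = 0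
         \<or> \<chi> (r*k - 2*r - 1) = 0 \<or> \<chi> (r*k - 2*r + 1) = 1"
  shows "\<exists>x. is_solution_in k (r*k - 2*r + 1) x \<and> zero_sum r \<chi> k x"
proof -
  define N where "N = r*k - 2*r + 1"
  define E where "E = r*k - 2*r - 1"
  have r3: "r \<ge> 3"
  proof (rule ccontr)
    assume "\<not> r \<ge> 3" hence "r = 2" using assms(1) by simp
    thus False using assms(5,6) by simp
  qed
  define s where "s = r - 3"
  have rS: "r = s + 3" using r3 unfolding s_def by simp
  define D where "D = k - r - 2"
  have kD: "k = r + 2 + D" using assms(3) r3 unfolding D_def by simp
  have Dge: "D + 2 \<ge> r" using assms(3) kD by simp
  obtain m where km: "k = r * m" using assms(2) by blast
  have kr: "(k - r) mod r = 0"
  proof -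
    have "k - r = r * (m - 1)" using km by (simp add: right_diff_distrib')
    thus ?thesis by simp
  qed
  have kmod: "k mod r = 0" using km by simp
  have Neq: "N = r*(r+D) + 1" unfolding N_def by (simp add: rS kD algebra_simps)
  have Eeq: "E = r*(r+D) - 1" unfolding E_def by (simp add: rS kD algebra_simps)
  have col: "\<chi> i \<in> {0,1}" if "1 \<le> i" "i \<le> N" for i
    using assms(4) that unfolding N_def by auto
  have k2: "k \<ge> 2" using kD by simp
  have le_N: "i \<le> N" if "i \<le> k" for i
  proof -
    have "k \<le> r*(r+D)" unfolding kD rS by (simp add: algebra_simps)
    thus ?thesis using that Neq by simp
  qed
  have EN: "E \<le> N" using Eeq Neq by simp
  have E1: "1 \<le> E" using Eeq rS by (simp add: algebra_simps)
  have kr3: "k \<ge> r + 3" using Dge kD r3 by simp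
  have vals: "1 \<le> k - 1" "k - 1 \<le> N" "1 \<le> k - 2" "k - 2 \<le> N" "1 \<le> r" "r \<le> N"
     "1 \<le> r - 1" "r - 1 \<le> N" "2 \<le> N" using kr3 r3 le_N by auto
  have cN: "\<chi> N \<in> {0,1}" using col[of N] Neq by simp
  have cE: "\<chi> E \<in> {0,1}" using col[of E] EN E1 by simp
  have cr: "\<chi> r \<in> {0,1}" using col[of r] vals by simp
  have ck2: "\<chi> (k-2) \<in> {0,1}" using col[of "k-2"] vals by simp
  have c2: "\<chi> 2 \<in> {0,1}" using col[of 2] vals by simp
  have "\<exists>x. is_solution_in k N x \<and> zero_sum r \<chi> k x"
  proof (cases "\<chi> (k - 1) = 0")
    case True
    define xs where "xs = replicate (k-1) (1::nat)"
    show ?thesis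
      by (rule mk[of xs k N \<chi> r]) (use True k2 assms(5) vals in \<open>auto simp: xs_def sum_list_replicate\<close>)
  next
    case False
    hence ck1: "\<chi> (k-1) = 1" using col[of "k-1"] vals by auto
    show ?thesis
    proof (cases "\<chi> N = 1")
      case True
      define xs where "xs = replicate (r-1) (k-1) @ replicate (k-r) (1::nat)"
      have L: "length xs = k - 1" unfolding xs_def using kr3 r3 by simp
      have El: "\<forall>v\<in>set xs. 1 \<le> v \<and> v \<le> N" unfolding xs_def using vals by auto
      have S: "sum_list xs = N" unfolding Neq xs_def by (simp add: sum_list_replicate rS kD algebra_simps)
      have C: "sum_list (map \<chi> xs) = r - 1" using ck1 assms(5) by (simp add: xs_def sum_list_replicate)
      have M: "(sum_list (map \<chi> xs) + \<chi> N) mod r = 0" using True r3 by (simp add: C)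
      show ?thesis by (rule mk2[OF L k2 El S order.refl M])
    next
      case False
      hence cN0: "\<chi> N = 0" using cN by auto
      show ?thesis
      proof (cases "\<chi> r = 0")
        case True
        define xs where "xs = [1] @ replicate (k-2) r"
        have L: "length xs = k - 1" unfolding xs_def using kr3 r3 by simp
        have El: "\<forall>v\<in>set xs. 1 \<le> v \<and> v \<le> N" unfolding xs_def using vals by auto
        have S: "sum_list xs = N" unfolding Neq xs_def by (simp add: sum_list_replicate rS kD algebra_simps)
        have C: "sum_list (map \<chi> xs) = 0" using True assms(5) by (simp add: xs_def sum_list_replicate)
        have M: "(sum_list (map \<chi> xs) + \<chi> N) mod r = 0" using cN0 by (simp add: C)
        show ?thesis by (rule mk2[OF L k2 El S order.refl M])
      next
        case False
        hence cr1: "\<chi> r = 1" using cr by auto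
        show ?thesis
        proof (cases "\<chi> E = 1")
          case True
          define xs where "xs = replicate (r+1) (r-1) @ replicate (k-r-2) r"
          have L: "length xs = k - 1" unfolding xs_def using kr3 r3 by simp
          have El: "\<forall>v\<in>set xs. 1 \<le> v \<and> v \<le> N" unfolding xs_def using vals by auto
          have S: "sum_list xs = E" unfolding Eeq xs_def by (simp add: sum_list_replicate rS kD algebra_simps)
          have C: "sum_list (map \<chi> xs) = k - 1" using kr3 cr1 assms(6)
            by (simp add: xs_def sum_list_replicate)
          have M: "(sum_list (map \<chi> xs) + \<chi> E) mod r = 0" using True kmod kr3 by (simp add: C)
          show ?thesis by (rule mk2[OF L k2 El S EN M])
        next
          case False
          hence cE0: "\<chi> E = 0" using cE by auto
          show ?thesis
          proof (cases "\<chi> (k-2) = 1")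
            case True
            have D1: "D \<ge> 1" using Dge r3 by simp
            define q where "q = (r*s) div D"
            define rem where "rem = (r*s) mod D"
            have qr: "q*D + rem = r*s" unfolding q_def rem_def by simp
            have remD: "rem < D" unfolding rem_def using D1 by simp
            have qle: "q \<le> D + 2"
            proof (rule ccontr)
              assume "\<not> q \<le> D + 2"
              hence "D + 3 \<le> q" by simp
              hence "(D+3)*D \<le> q*D" by (rule mult_le_mono1)
              moreover have "(r+1)*(r-2) \<le> (D+3)*D" using Dge by (intro mult_le_mono) auto
              ultimately have "(r+1)*(r-2) \<le> r*s" using qr by linarith
              moreover have "(r+1)*(r-2) = s*s + 5*s + 4" unfolding rS by (simp add: algebra_simps)
              moreover have "r*s = s*s + 3*s" unfolding rS by (simp add: algebra_simps)
              ultimately show False by linarith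
            qed
            have ccr: "(D + 2) mod r = 0" using kr kD by simp
            show ?thesis
            proof (cases "rem \<le> q")
              case True
              obtain t where qt: "q = rem + t" using True le_Suc_ex by blast
              obtain u where qu: "D + 2 = q + u" using qle le_Suc_ex by blast
              define xs where "xs = replicate (r-1) 1 @ replicate rem (k-1) @ replicate t (k-2) @ replicate u r"
              have L: "length xs = k - 1" unfolding xs_def using kD qt qu r3 by simp
              have El: "\<forall>v\<in>set xs. 1 \<le> v \<and> v \<le> N" unfolding xs_def using vals by auto
              have X: "xs = replicate (s+2) (1::nat) @ replicate rem (s+3+1+D) @ replicate t (s+3+D) @ replicate u (s+3)"
                unfolding xs_def using rS kD by simp
              have S1: "sum_list xs = r - 1 + (q*D + rem) + (q+u)*r"
                unfolding X qt using a1[of s rem D t u] rS by simp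
              have S: "sum_list xs = E" unfolding S1 qr qu[symmetric] Eeq rS by (simp add: algebra_simps)
              have C0: "sum_list (map \<chi> xs) = rem + t + u" using ck1 \<open>\<chi> (k-2) = 1\<close> cr1 assms(5)
                by (simp add: xs_def sum_list_replicate)
              have C: "sum_list (map \<chi> xs) = D + 2" using C0 qu qt by simp
              have M: "(sum_list (map \<chi> xs) + \<chi> E) mod r = 0" using cE0 ccr by (simp add: C)
              show ?thesis by (rule mk2[OF L k2 El S EN M])
            next
              case False
              have "q + 1 \<le> rem" using False by simp
              then obtain p where rp: "rem = q + 1 + p" using le_Suc_ex by blast
              obtain w where Dw: "D = rem + w" using remD le_Suc_ex less_imp_le by blast
              define xs where "xs = replicate (r-1) 1 @ replicate (q+1) (k-2) @ replicate w (r-1) @ replicate (p+2) r"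
              have L: "length xs = k - 1" unfolding xs_def using kD Dw rp r3 by simp
              have El: "\<forall>v\<in>set xs. 1 \<le> v \<and> v \<le> N" unfolding xs_def using vals by auto
              have X: "xs = replicate (s+2) (1::nat) @ replicate (q+1) (s+3+D) @ replicate w (s+2) @ replicate (p+2) (s+3)"
                unfolding xs_def using rS kD by simp
              have S1: "sum_list xs = r - 1 + (q*D + rem) + (D+2)*r"
                unfolding X using a2[of D rem w q p s] Dw rp rS by simp
              have S: "sum_list xs = E" unfolding S1 qr Eeq rS by (simp add: algebra_simps)
              have C0: "sum_list (map \<chi> xs) = q + 1 + w + (p + 2)" using \<open>\<chi> (k-2) = 1\<close> cr1 assms(5,6)
                by (simp add: xs_def sum_list_replicate)
              have C: "sum_list (map \<chi> xs) = D + 2" using C0 Dw rp by simp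
              have M: "(sum_list (map \<chi> xs) + \<chi> E) mod r = 0" using cE0 ccr by (simp add: C)
              show ?thesis by (rule mk2[OF L k2 El S EN M])
            qed
          next
            case False
            hence ck20: "\<chi> (k-2) = 0" using ck2 by auto
            obtain e where ke: "k = 2*r + e" using assms(3) le_Suc_ex by blast
            show ?thesis
            proof (cases "\<chi> 2 = 0")
              case True
              define xs where "xs = replicate (r-1) (k-2) @ replicate (r-3) 2 @ replicate (e+3) 1"
              have L: "length xs = k - 1" unfolding xs_def using ke r3 by simp
              have El: "\<forall>v\<in>set xs. 1 \<le> v \<and> v \<le> N" unfolding xs_def using vals by auto
              have X: "xs = replicate (s+2) (2*(s+3)+e-2) @ replicate s 2 @ replicate (e+3) (1::nat)"
                unfolding xs_def using rS ke by simp
              have S: "sum_list xs = E" unfolding X E_def using a3[of s e] rS ke by simp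
              have C: "sum_list (map \<chi> xs) = 0" using ck20 True assms(5)
                by (simp add: xs_def sum_list_replicate)
              have M: "(sum_list (map \<chi> xs) + \<chi> E) mod r = 0" using cE0 by (simp add: C)
              show ?thesis by (rule mk2[OF L k2 El S EN M])
            next
              case False
              hence c21: "\<chi> 2 = 1" using c2 by auto
              define xs where "xs = replicate (r-2) (k-2) @ replicate 2 (r-1) @ replicate (r+e-2) 2 @ [1]"
              have L: "length xs = k - 1" unfolding xs_def using ke r3 by simp
              have El: "\<forall>v\<in>set xs. 1 \<le> v \<and> v \<le> N" unfolding xs_def using vals by auto
              have X: "xs = replicate (s+1) (2*(s+3)+e-2) @ replicate 2 (s+2) @ replicate (s+3+e-2) 2 @ [1::nat]"
                unfolding xs_def using rS ke by simp
              have S: "sum_list xs = E" unfolding X E_def using a4[of s e] rS ke by simp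
              have C0: "sum_list (map \<chi> xs) = 2 + (r + e - 2)" using ck20 c21 assms(5,6)
                by (simp add: xs_def sum_list_replicate)
              have C: "sum_list (map \<chi> xs) = r + e" using C0 r3 by simp
              have ccr: "(r + e) mod r = 0" using kr ke by simp
              have M: "(sum_list (map \<chi> xs) + \<chi> E) mod r = 0" using cE0 ccr by (simp add: C)
              show ?thesis by (rule mk2[OF L k2 El S EN M])
            qed
          qed
        qed
      qed
    qed
  qed
  thus ?thesis unfolding N_def .
qed
end
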